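(* Let $I$ be a nonempty set and $H$ a real Hilbert space; for each $i\in I$ let $C_i$ be a nonempty compact convex subset of $H$. Equip $H^I$ with the product topology generated by the norm topology on each factor $H$. For each $i\in I$ let $T_i:C_i\to C_i$ be nonexpansive with $\mathrm{Fix}(T_i)\neq\emptyset$, and let $f_i:C_i\to C_i$ be an $\alpha_i$-contraction, i.e. $\|f_i(x)-f_i(y)\|\le\alpha_i\|x-y\|$ with $0\le\alpha_i<1$. Let $\{\epsilon_n\}\subseteq(0,1)$ with $\lim_n\epsilon_n=0$. Then for each $i\in I$ there exist a unique sunny nonexpansive retraction $P_i$ of $C_i$ onto $\mathrm{Fix}(T_i)$ and a point $x_i\in C_i$ such that the sequence $\{g_n\}$ in $H^I$ defined by $g_n(i)=z_{n,i}$ $(i\in I)$, where $z_{n,i}\in C_i$ satisfies $$z_{n,i}=\epsilon_nf_i(z_{n,i})+(1-\epsilon_n)\frac1n\sum_{k=1}^nT_i^kz_{n,i},$$ converges in the product topology of $H^I$ to the function $g:I\to H$ defined by $g(i)=P_ix_i$.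
   Context: A retraction $P$ of $C$ onto $D\subseteq C$ (i.e. $Px=x$ for $x\in D$) is sunny if $P(Px+t(x-Px))=Px$ whenever $x\in C$, $t\ge0$ and $Px+t(x-Px)\in C$. $\mathrm{Fix}(T)$ is the set of fixed points of $T$. *)

theory Defs
  imports "HOL-Analysis.Analysis"
begin

definition nonexpansive_on :: "'a::real_normed_vector set \<Rightarrow> ('a \<Rightarrow> 'a) \<Rightarrow> bool" where
  "nonexpansive_on C T \<longleftrightarrow> (\<forall>x\<in>C. \<forall>y\<in>C. norm (T x - T y) \<le> norm (x - y))"

definition Fix :: "'a set \<Rightarrow> ('a \<Rightarrow> 'a) \<Rightarrow> 'a set" where
  "Fix C T = {x \<in> C. T x = x}"

definition retraction_onto :: "'a set \<Rightarrow> 'a set \<Rightarrow> ('a \<Rightarrow> 'a) \<Rightarrow> bool" where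
  "retraction_onto C D P \<longleftrightarrow> D \<subseteq> C \<and> P ` C \<subseteq> D \<and> (\<forall>x\<in>D. P x = x)"

definition sunny :: "'a::real_vector set \<Rightarrow> ('a \<Rightarrow> 'a) \<Rightarrow> bool" where
  "sunny C P \<longleftrightarrow> (\<forall>x\<in>C. \<forall>t::real. t \<ge> 0 \<longrightarrow> P x + t *\<^sub>R (x - P x) \<in> C \<longrightarrow>
      P (P x + t *\<^sub>R (x - P x)) = P x)"

definition sunny_nonexpansive_retraction :: "'a::real_normed_vector set \<Rightarrow> 'a set \<Rightarrow> ('a \<Rightarrow> 'a) \<Rightarrow> bool" where
  "sunny_nonexpansive_retraction C D P \<longleftrightarrow> retraction_onto C D P \<and> sunny C P \<and> nonexpansive_on C P"

end

theory Submission
  imports Defs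
begin


definition proj :: "'a::real_inner set \<Rightarrow> 'a \<Rightarrow> 'a" where
  "proj D a = (SOME y. y \<in> D \<and> (\<forall>z\<in>D. dist a y \<le> dist a z))"

lemma proj_ex:
  fixes D :: "'a::real_inner set"
  assumes "compact D" "D \<noteq> {}"
  shows "proj D a \<in> D \<and> (\<forall>z\<in>D. dist a (proj D a) \<le> dist a z)"
proof -
  have "\<exists>y\<in>D. \<forall>z\<in>D. dist a y \<le> dist a z"
    by (rule continuous_attains_inf[OF assms]) (intro continuous_intros)
  then show ?thesis unfolding proj_def
    using someI_ex[of "\<lambda>y. y \<in> D \<and> (\<forall>z\<in>D. dist a y \<le> dist a z)"] by blast
qed

lemma proj_dot:
  fixes D :: "'a::real_inner set"
  assumes "compact D" "D \<noteq> {}" "convex D" "y \<in> D"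
  shows "inner (a - proj D a) (y - proj D a) \<le> 0"
  using any_closest_point_dot[OF assms(3) compact_imp_closed[OF assms(1)] _ assms(4)] proj_ex[OF assms(1,2)]
  by blast

lemma proj_VI_unique:
  fixes D :: "'a::real_inner set"
  assumes "compact D" "D \<noteq> {}" "convex D" "y \<in> D" "\<forall>z\<in>D. inner (a - y) (z - y) \<le> 0"
  shows "proj D a = y"
proof -
  let ?p = "proj D a"
  have p: "?p \<in> D" using proj_ex[OF assms(1,2)] by blast
  have 1: "inner (a - ?p) (y - ?p) \<le> 0" using proj_dot[OF assms(1-4)] .
  have 2: "inner (a - y) (?p - y) \<le> 0" using assms(5) p by blast
  have "inner (?p - y) (?p - y) = inner (a - y) (?p - y) + inner (a - ?p) (y - ?p)"
    by (simp add: inner_diff_left inner_diff_right inner_commute)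
  hence "inner (?p - y) (?p - y) \<le> 0" using 1 2 by linarith
  hence "?p - y = 0" by (metis inner_gt_zero_iff not_le)
  thus ?thesis by simp
qed

lemma proj_nonexp:
  fixes D :: "'a::real_inner set"
  assumes "compact D" "D \<noteq> {}" "convex D"
  shows "norm (proj D x - proj D y) \<le> norm (x - y)"
proof -
  have "inner (x - proj D x) (proj D y - proj D x) \<le> 0"
    and "inner (y - proj D y) (proj D x - proj D y) \<le> 0"
    using proj_dot[OF assms] proj_ex[OF assms(1,2)] by blast+
  then show ?thesis unfolding norm_le
    using inner_ge_zero[of "(x - proj D x) - (y - proj D y)"]
    by (simp add: inner_add inner_diff inner_commute)
qed

lemma proj_snr:
  fixes C D :: "'a::real_inner set"
  assumes "compact D" "D \<noteq> {}" "convex D" "D \<subseteq> C"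
  shows "sunny_nonexpansive_retraction C D (proj D)"
proof -
  have r: "retraction_onto C D (proj D)"
    unfolding retraction_onto_def
  proof (intro conjI ballI)
    show "D \<subseteq> C" by fact
    show "proj D ` C \<subseteq> D" using proj_ex[OF assms(1,2)] by blast
    fix x assume "x \<in> D" thus "proj D x = x" by (intro proj_VI_unique[OF assms(1-3)]) auto
  qed
  have s: "sunny C (proj D)"
    unfolding sunny_def
  proof (intro ballI allI impI)
    fix x and t :: real assume x: "x \<in> C" and t: "0 \<le> t"
    show "proj D (proj D x + t *\<^sub>R (x - proj D x)) = proj D x"
    proof (rule proj_VI_unique[OF assms(1-3)])
      show "proj D x \<in> D" using proj_ex[OF assms(1,2)] by blast
      show "\<forall>z\<in>D. inner (proj D x + t *\<^sub>R (x - proj D x) - proj D x) (z - proj D x) \<le> 0"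
      proof
        fix z assume "z \<in> D"
        have "inner (x - proj D x) (z - proj D x) \<le> 0" using proj_dot[OF assms(1-3) \<open>z\<in>D\<close>] .
        thus "inner (proj D x + t *\<^sub>R (x - proj D x) - proj D x) (z - proj D x) \<le> 0"
          using t by (simp add: mult_nonneg_nonpos)
      qed
    qed
  qed
  have n: "nonexpansive_on C (proj D)"
    unfolding nonexpansive_on_def using proj_nonexp[OF assms(1-3)] by blast
  show ?thesis using r s n unfolding sunny_nonexpansive_retraction_def by blast
qed

lemma norm_add_scale_sq:
  fixes a b :: "'a::real_inner"
  shows "norm (a + t *\<^sub>R b)^2 = norm a ^2 + 2 * t * inner a b + t^2 * norm b ^2"
  unfolding power2_norm_eq_inner
  by (simp add: inner_add_left inner_add_right inner_commute algebra_simps power2_eq_square)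

lemma snr_VI:
  fixes C D :: "'a::real_inner set"
  assumes Q: "sunny_nonexpansive_retraction C D Q" and cC: "convex C" and x: "x \<in> C" and y: "y \<in> D"
  shows "inner (x - Q x) (y - Q x) \<le> 0"
proof (rule ccontr)
  have DC: "D \<subseteq> C" and QC: "Q ` C \<subseteq> D" and Qfix: "\<forall>x\<in>D. Q x = x" and sun: "sunny C Q"
    and ne: "nonexpansive_on C Q"
    using Q unfolding sunny_nonexpansive_retraction_def retraction_onto_def by auto
  assume neg: "\<not> ?thesis"
  define c where "c = inner (x - Q x) (y - Q x)"
  have c: "c > 0" using neg c_def by simp
  define m where "m = norm (x - Q x)^2"
  define t where "t = min 1 (c / (m + 1))"
  have m0: "m \<ge> 0" by (simp add: m_def)
  have t0: "t > 0" using c m0 by (simp add: t_def)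
  have t1: "t \<le> 1" by (simp add: t_def)
  have "t * m \<le> c / (m + 1) * m" using m0 by (intro mult_right_mono) (auto simp: t_def)
  also have "\<dots> < c" using c m0 by (simp add: field_simps)
  finally have tm: "t * m < c" .
  have Qx: "Q x \<in> C" using QC DC x by blast
  have "(1 - t) *\<^sub>R Q x + t *\<^sub>R x \<in> C" using convexD_alt[OF cC Qx x] t0 t1 by auto
  moreover have "(1 - t) *\<^sub>R Q x + t *\<^sub>R x = Q x + t *\<^sub>R (x - Q x)" by (simp add: algebra_simps)
  ultimately have w: "Q x + t *\<^sub>R (x - Q x) \<in> C" by simp
  have Qw: "Q (Q x + t *\<^sub>R (x - Q x)) = Q x" using sun w x t0 unfolding sunny_def by auto
  have yC: "y \<in> C" using y DC by blast
  have "norm (Q (Q x + t *\<^sub>R (x - Q x)) - Q y) \<le> norm ((Q x + t *\<^sub>R (x - Q x)) - y)"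
    using ne w yC unfolding nonexpansive_on_def by blast
  hence "norm (Q x - y) \<le> norm ((Q x - y) + t *\<^sub>R (x - Q x))"
    using Qw Qfix y by (simp add: algebra_simps)
  hence "norm (Q x - y)^2 \<le> norm ((Q x - y) + t *\<^sub>R (x - Q x))^2"
    by (simp add: power_mono)
  also have "\<dots> = norm (Q x - y)^2 + 2 * t * inner (Q x - y) (x - Q x) + t^2 * m"
    by (simp add: norm_add_scale_sq m_def)
  also have "inner (Q x - y) (x - Q x) = - c"
    unfolding c_def by (simp add: inner_commute inner_diff_left inner_diff_right)
  finally have "0 \<le> t * (t * m - 2 * c)" by (simp add: power2_eq_square algebra_simps)
  moreover have "t * (t * m - 2 * c) < 0" using t0 tm c by (simp add: mult_pos_neg)
  ultimately show False by linarith
qed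

lemma snr_unique:
  fixes C D :: "'a::real_inner set"
  assumes Q: "sunny_nonexpansive_retraction C D Q" and cC: "convex C"
    and "compact D" "D \<noteq> {}" "convex D" and y: "y \<in> C"
  shows "Q y = proj D y"
proof -
  have "Q y \<in> D" using Q y unfolding sunny_nonexpansive_retraction_def retraction_onto_def by auto
  thus ?thesis using snr_VI[OF Q cC y] by (intro proj_VI_unique[symmetric, OF assms(3-5)]) auto
qed



lemma nonexp_cont:
  assumes "nonexpansive_on C T"
  shows "continuous_on C T"
  unfolding continuous_on_iff
proof (intro ballI allI impI)
  fix x e assume "x \<in> C" "(0::real) < e"
  show "\<exists>d>0. \<forall>x'\<in>C. dist x' x < d \<longrightarrow> dist (T x') (T x) < e"
    using assms \<open>x\<in>C\<close> \<open>0<e\<close> unfolding nonexpansive_on_def dist_norm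
    by (metis le_less_trans)
qed

lemma convex_combo_sq:
  fixes w x y :: "'a::real_inner"
  shows "norm (w - ((1 - u) *\<^sub>R x + u *\<^sub>R y))^2
     = (1 - u) * norm (w - x)^2 + u * norm (w - y)^2 - u * (1 - u) * norm (x - y)^2"
  unfolding power2_norm_eq_inner
  by (simp add: inner_add_left inner_add_right inner_diff_left inner_diff_right inner_commute
      algebra_simps power2_eq_square)

lemma Fix_convex:
  fixes C :: "'a::real_inner set"
  assumes cC: "convex C" and TC: "T ` C \<subseteq> C" and ne: "nonexpansive_on C T"
  shows "convex (Fix C T)"
  unfolding convex_alt
proof (intro ballI allI impI)
  fix x y and u :: real assume x: "x \<in> Fix C T" and y: "y \<in> Fix C T" and u: "0 \<le> u \<and> u \<le> 1"
  define z where "z = (1 - u) *\<^sub>R x + u *\<^sub>R y"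
  have xC: "x \<in> C" and Tx: "T x = x" and yC: "y \<in> C" and Ty: "T y = y" using x y by (auto simp: Fix_def)
  have zC: "z \<in> C" unfolding z_def using convexD_alt[OF cC xC yC] u by auto
  define d where "d = norm (x - y)"
  have "z - x = u *\<^sub>R (y - x)" unfolding z_def by (simp add: algebra_simps)
  hence zx: "norm (z - x) = u * d" using u by (simp add: d_def norm_minus_commute)
  have "z - y = (1 - u) *\<^sub>R (x - y)" unfolding z_def by (simp add: algebra_simps)
  hence zy: "norm (z - y) = (1 - u) * d" using u by (simp add: d_def)
  have a: "norm (T z - x) \<le> u * d" using ne zC xC Tx zx unfolding nonexpansive_on_def by metis
  have b: "norm (T z - y) \<le> (1 - u) * d" using ne zC yC Ty zy unfolding nonexpansive_on_def by metis
  have a2: "norm (T z - x)^2 \<le> (u * d)^2" using a by (intro power_mono) auto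
  have b2: "norm (T z - y)^2 \<le> ((1 - u) * d)^2" using b by (intro power_mono) auto
  have "norm (T z - z)^2 = (1 - u) * norm (T z - x)^2 + u * norm (T z - y)^2 - u * (1 - u) * d^2"
    unfolding z_def d_def by (rule convex_combo_sq)
  also have "\<dots> \<le> (1 - u) * (u * d)^2 + u * ((1 - u) * d)^2 - u * (1 - u) * d^2"
    using a2 b2 u by (intro diff_mono add_mono mult_left_mono) auto
  also have "\<dots> = 0" by (simp add: power2_eq_square algebra_simps)
  finally have "T z = z" by simp
  thus "(1 - u) *\<^sub>R x + u *\<^sub>R y \<in> Fix C T" using zC unfolding Fix_def z_def by simp
qed

lemma Fix_compact:
  fixes C :: "'a::real_inner set"
  assumes "compact C" and ne: "nonexpansive_on C T"
  shows "compact (Fix C T)"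
proof -
  have "continuous_on C (\<lambda>x. T x - x)" using nonexp_cont[OF ne] by (intro continuous_intros)
  hence "closed {x \<in> C. T x - x = 0}"
    using continuous_closed_preimage_constant compact_imp_closed[OF assms(1)] by blast
  moreover have "{x \<in> C. T x - x = 0} = C \<inter> Fix C T" by (auto simp: Fix_def)
  ultimately have "closed (C \<inter> Fix C T)" by simp
  hence "compact (C \<inter> (C \<inter> Fix C T))" using assms(1) by blast
  moreover have "C \<inter> (C \<inter> Fix C T) = Fix C T" by (auto simp: Fix_def)
  ultimately show ?thesis by simp
qed

lemma iter_props:
  assumes TC: "T ` C \<subseteq> C" and ne: "nonexpansive_on C T"
  shows "(T^^k) ` C \<subseteq> C \<and> nonexpansive_on C (T^^k) \<and> (\<forall>p\<in>Fix C T. (T^^k) p = p)"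
proof (induction k)
  case 0 thus ?case by (simp add: nonexpansive_on_def)
next
  case (Suc k)
  have 1: "(T^^Suc k) ` C \<subseteq> C" using Suc TC by auto
  have 2: "nonexpansive_on C (T^^Suc k)"
    unfolding nonexpansive_on_def
  proof (intro ballI)
    fix x y assume "x \<in> C" "y \<in> C"
    hence "(T^^k) x \<in> C" "(T^^k) y \<in> C" using Suc by auto
    hence "norm (T ((T^^k) x) - T ((T^^k) y)) \<le> norm ((T^^k) x - (T^^k) y)"
      using ne unfolding nonexpansive_on_def by blast
    also have "\<dots> \<le> norm (x - y)" using Suc \<open>x\<in>C\<close> \<open>y\<in>C\<close> unfolding nonexpansive_on_def by blast
    finally show "norm ((T^^Suc k) x - (T^^Suc k) y) \<le> norm (x - y)" by simp
  qed
  have 3: "\<forall>p\<in>Fix C T. (T^^Suc k) p = p" using Suc by (auto simp: Fix_def)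
  show ?case using 1 2 3 by blast
qed



lemma fix_ineq:
  fixes a b p :: "'a::real_inner"
  assumes "norm (b - p) \<le> norm (a - p)"
  shows "norm (a - b)^2 \<le> 2 * inner (a - b) (a - p)"
proof -
  have "norm (b - p)^2 \<le> norm (a - p)^2" using assms by (intro power_mono) auto
  moreover have "(a - b) - (a - p) = p - b" by simp
  hence "inner (a - b) (a - p) = (norm (a - b)^2 + norm (a - p)^2 - norm (b - p)^2) / 2"
    using dot_norm_neg[of "a - b" "a - p"] by (simp add: norm_minus_commute)
  hence "2 * inner (a - b) (a - p) = norm (a - b)^2 + norm (a - p)^2 - norm (b - p)^2" by simp
  ultimately show ?thesis by linarith
qed

lemma step_est:
  fixes C :: "'a::real_inner set" and zz p :: 'a
  assumes TC: "T ` C \<subseteq> C" and ne: "nonexpansive_on C T" and p: "p \<in> Fix C T"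
    and zz: "zz \<in> C" and fz: "f zz \<in> C" and B: "\<forall>x\<in>C. norm x \<le> B"
    and n: "n \<ge> 1" and e: "0 < e"
    and eq: "zz = e *\<^sub>R f zz + (1 - e) *\<^sub>R ((1 / real n) *\<^sub>R (\<Sum>k=1..n. (T^^k) zz))"
  defines "S \<equiv> (1 / real n) *\<^sub>R (\<Sum>k=1..n. (T^^k) zz)"
  shows "0 \<le> inner (f zz - S) (zz - p)"
    and "norm (zz - S) \<le> e * (2 * B)"
    and "n \<ge> 2 \<Longrightarrow> norm (zz - T zz)^2 \<le> 64 * e * B^2"
proof -
  have it: "(T^^k) zz \<in> C" for k using iter_props[OF TC ne, of k] zz by (auto simp: image_subset_iff)
  have pC: "p \<in> C" and Tp: "T p = p" using p by (auto simp: Fix_def)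
  have itp: "\<And>k. norm ((T^^k) zz - p) \<le> norm (zz - p)"
  proof -
    fix k
    have ne_k: "nonexpansive_on C (T^^k)" and fx_k: "(T^^k) p = p" using iter_props[OF TC ne, of k] p by auto
    have "norm ((T^^k) zz - (T^^k) p) \<le> norm (zz - p)"
      using ne_k zz pC unfolding nonexpansive_on_def by blast
    thus "norm ((T^^k) zz - p) \<le> norm (zz - p)" using fx_k by simp
  qed
  define a where "a k = norm (zz - (T^^k) zz)" for k
  have h1: "\<And>k. a k ^2 \<le> 2 * inner (zz - (T^^k) zz) (zz - p)"
    unfolding a_def by (rule fix_ineq[OF itp])
  have nn: "real n > 0" using n by simp
  have "(\<Sum>k=1..n. (zz - (T^^k) zz)) = real n *\<^sub>R zz - (\<Sum>k=1..n. (T^^k) zz)"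
    by (simp add: sum_subtractf sum_constant_scaleR)
  also have "\<dots> = real n *\<^sub>R (zz - S)" unfolding S_def using nn by (simp add: scaleR_diff_right)
  finally have sumeq: "(\<Sum>k=1..n. (zz - (T^^k) zz)) = real n *\<^sub>R (zz - S)" .
  have h2: "(\<Sum>k=1..n. inner (zz - (T^^k) zz) (zz - p)) = real n * inner (zz - S) (zz - p)"
  proof -
    have "(\<Sum>k=1..n. inner (zz - (T^^k) zz) (zz - p)) = inner (\<Sum>k=1..n. (zz - (T^^k) zz)) (zz - p)"
      by (rule inner_sum_left[symmetric])
    also have "\<dots> = real n * inner (zz - S) (zz - p)" by (simp only: sumeq inner_scaleR_left)
    finally show ?thesis .
  qed
  have h3: "zz - S = e *\<^sub>R (f zz - S)"
  proof -
    have "zz = e *\<^sub>R f zz + (1 - e) *\<^sub>R S" using eq unfolding S_def .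
    hence "zz - S = e *\<^sub>R f zz + (1 - e) *\<^sub>R S - S" by simp
    also have "\<dots> = e *\<^sub>R (f zz - S)" by (simp add: algebra_simps)
    finally show ?thesis .
  qed
  have nS: "norm S \<le> B"
  proof -
    have "norm (\<Sum>k=1..n. (T^^k) zz) \<le> (\<Sum>k=1..n. norm ((T^^k) zz))" by (rule norm_sum)
    also have "\<dots> \<le> (\<Sum>k=1..n. B)" using B it by (intro sum_mono) auto
    also have "\<dots> = real n * B" by simp
    finally show ?thesis unfolding S_def using nn by (simp add: field_simps)
  qed
  have B0: "0 \<le> B" using B zz norm_ge_zero order_trans by blast
  have nfS: "norm (f zz - S) \<le> 2 * B"
    using norm_triangle_ineq4[of "f zz" S] bspec[OF B fz] nS by linarith
  have nzp: "norm (zz - p) \<le> 2 * B"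
    using norm_triangle_ineq4[of zz p] bspec[OF B zz] bspec[OF B pC] by linarith
  have h4: "inner (f zz - S) (zz - p) \<le> 4 * B^2"
  proof -
    have "inner (f zz - S) (zz - p) \<le> norm (f zz - S) * norm (zz - p)" by (rule norm_cauchy_schwarz)
    also have "\<dots> \<le> (2 * B) * (2 * B)" using nfS nzp B0 by (intro mult_mono) auto
    finally show ?thesis by (simp add: power2_eq_square)
  qed
  have sumA: "(\<Sum>k=1..n. a k ^2) \<le> 2 * (real n * inner (zz - S) (zz - p))"
  proof -
    have "(\<Sum>k=1..n. a k ^2) \<le> (\<Sum>k=1..n. 2 * inner (zz - (T^^k) zz) (zz - p))"
      using h1 by (intro sum_mono) auto
    thus ?thesis by (simp only: sum_distrib_left[symmetric] h2)
  qed
  have "0 \<le> (\<Sum>k=1..n. a k ^2)" by (intro sum_nonneg) auto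
  hence "0 \<le> real n * inner (zz - S) (zz - p)" using sumA by linarith
  hence "0 \<le> inner (zz - S) (zz - p)" using nn by (simp add: zero_le_mult_iff)
  hence "0 \<le> e * inner (f zz - S) (zz - p)" using h3 by simp
  thus "0 \<le> inner (f zz - S) (zz - p)" using e by (simp add: zero_le_mult_iff)
  show "norm (zz - S) \<le> e * (2 * B)" using h3 nfS e by (simp add: mult_left_mono)
  assume n2: "n \<ge> 2"
  have sumA2: "(\<Sum>k=1..n. a k ^2) \<le> 8 * (real n * (e * B^2))"
  proof -
    have "inner (zz - S) (zz - p) = e * inner (f zz - S) (zz - p)" using h3 by simp
    also have "\<dots> \<le> e * (4 * B^2)" using h4 e by (intro mult_left_mono) auto
    finally have "inner (zz - S) (zz - p) \<le> e * (4 * B^2)" .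
    hence "2 * (real n * inner (zz - S) (zz - p)) \<le> 2 * (real n * (e * (4 * B^2)))"
      using nn by (intro mult_left_mono) auto
    moreover have "2 * (real n * (e * (4 * B^2))) = 8 * (real n * (e * B^2))" by simp
    ultimately show ?thesis using sumA by linarith
  qed
  have h5: "\<And>k. norm (zz - T zz)^2 \<le> 2 * a (Suc k)^2 + 2 * a k ^2"
  proof -
    fix k
    have "norm (T ((T^^k) zz) - T zz) \<le> norm ((T^^k) zz - zz)"
      using ne it zz unfolding nonexpansive_on_def by blast
    hence "norm ((T^^Suc k) zz - T zz) \<le> a k" unfolding a_def by (simp add: norm_minus_commute)
    moreover have "norm (zz - T zz) \<le> norm (zz - (T^^Suc k) zz) + norm ((T^^Suc k) zz - T zz)"
      using norm_triangle_ineq[of "zz - (T^^Suc k) zz" "(T^^Suc k) zz - T zz"] by simp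
    ultimately have "norm (zz - T zz) \<le> a (Suc k) + a k" unfolding a_def by linarith
    hence "norm (zz - T zz)^2 \<le> (a (Suc k) + a k)^2" by (intro power_mono) auto
    also have "\<dots> \<le> 2 * a (Suc k)^2 + 2 * a k ^2"
      using sum_squares_ge_zero[of "a (Suc k) - a k" 0] by (simp add: power2_eq_square algebra_simps)
    finally show "norm (zz - T zz)^2 \<le> 2 * a (Suc k)^2 + 2 * a k ^2" .
  qed
  have anz: "\<And>k. 0 \<le> a k ^2" by simp
  have s1: "real (n - 1) * norm (zz - T zz)^2 = (\<Sum>k=1..n-1. norm (zz - T zz)^2)" by simp
  have s2: "(\<Sum>k=1..n-1. norm (zz - T zz)^2) \<le> (\<Sum>k=1..n-1. 2 * a (Suc k)^2 + 2 * a k ^2)"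
    using h5 by (intro sum_mono) auto
  have s3: "(\<Sum>k=1..n-1. 2 * a (Suc k)^2 + 2 * a k ^2) = 2 * (\<Sum>k=1..n-1. a (Suc k)^2) + 2 * (\<Sum>k=1..n-1. a k ^2)"
    by (simp only: sum.distrib sum_distrib_left)
  have s4: "(\<Sum>k=1..n-1. a (Suc k)^2) = (\<Sum>k=2..n. a k ^2)"
    using n2 sum.shift_bounds_cl_Suc_ivl[of "\<lambda>k. a k ^2" 1 "n-1"] by (simp add: numeral_2_eq_2)
  have s5: "(\<Sum>k=2..n. a k ^2) \<le> (\<Sum>k=1..n. a k ^2)"
    by (intro sum_mono2) auto
  have s6: "(\<Sum>k=1..n-1. a k ^2) \<le> (\<Sum>k=1..n. a k ^2)"
    by (intro sum_mono2) auto
  have c1: "real (n - 1) * norm (zz - T zz)^2 \<le> 4 * (\<Sum>k=1..n. a k ^2)"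
    using s1 s2 s3 s4 s5 s6 by linarith
  define m where "m = real (n - 1)"
  have nm: "real n \<le> 2 * m" using n2 unfolding m_def by (simp add: of_nat_diff)
  have m0: "m > 0" using n2 unfolding m_def by simp
  have eB: "0 \<le> e * B^2" using e by simp
  have "real n * (e * B^2) \<le> (2 * m) * (e * B^2)" by (rule mult_right_mono[OF nm eB])
  moreover have "(\<Sum>k=1..n. a k ^2) \<le> 8 * (real n * (e * B^2))" using sumA2 by simp
  ultimately have "m * norm (zz - T zz)^2 \<le> m * (64 * (e * B^2))" using c1 unfolding m_def[symmetric] by linarith
  hence "norm (zz - T zz)^2 \<le> 64 * (e * B^2)" using m0 by (rule mult_left_le_imp_le) 
  thus "norm (zz - T zz)^2 \<le> 64 * e * B^2" by (simp add: mult.assoc)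
qed



lemma core_conv:
  fixes C :: "'a::real_inner set" and z :: "nat \<Rightarrow> 'a"
  assumes Cne: "C \<noteq> {}" and Ccpt: "compact C" and Ccvx: "convex C"
    and TC: "T ` C \<subseteq> C" and ne: "nonexpansive_on C T"
    and fC: "f ` C \<subseteq> C" and al: "0 \<le> \<alpha>" "\<alpha> < 1"
    and fcon: "\<forall>x\<in>C. \<forall>y\<in>C. norm (f x - f y) \<le> \<alpha> * norm (x - y)"
    and eps: "\<And>n. 0 < \<epsilon> n \<and> \<epsilon> n < 1" and epsl: "\<epsilon> \<longlonglongrightarrow> 0"
    and qD: "q \<in> Fix C T" and qVI: "\<forall>p\<in>Fix C T. inner (f q - q) (p - q) \<le> 0"
    and z: "\<forall>n\<ge>1. z n \<in> C \<and>
             z n = \<epsilon> n *\<^sub>R f (z n) + (1 - \<epsilon> n) *\<^sub>R ((1 / real n) *\<^sub>R (\<Sum>k=1..n. (T ^^ k) (z n)))"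
  shows "z \<longlonglongrightarrow> q"
proof (rule ccontr)
  assume nconv: "\<not> z \<longlonglongrightarrow> q"
  define D where "D = Fix C T"
  obtain B where B: "\<forall>x\<in>C. norm x \<le> B"
    using compact_imp_bounded[OF Ccpt] unfolding bounded_iff by blast
  have B0: "0 \<le> B" using B Cne norm_ge_zero order_trans by blast
  define Sn where "Sn n = (1 / real n) *\<^sub>R (\<Sum>k=1..n. (T ^^ k) (z n))" for n
  have fne: "nonexpansive_on C f"
    unfolding nonexpansive_on_def
  proof (intro ballI)
    fix x y assume "x \<in> C" "y \<in> C"
    hence "norm (f x - f y) \<le> \<alpha> * norm (x - y)" using fcon by blast
    also have "\<dots> \<le> 1 * norm (x - y)" using al by (intro mult_right_mono) auto
    finally show "norm (f x - f y) \<le> norm (x - y)" by simp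
  qed
  have zC: "z n \<in> C" if "n \<ge> 1" for n using z that by blast
  have fzC: "f (z n) \<in> C" if "n \<ge> 1" for n using fC zC[OF that] by blast
  have est1: "0 \<le> inner (f (z n) - Sn n) (z n - p)" if "n \<ge> 1" "p \<in> D" for n p
    using step_est(1)[where T=T and C=C and p=p and zz="z n" and f=f and B=B and n=n and e="\<epsilon> n", OF TC ne _ zC[OF that(1)] fzC[OF that(1)] B that(1)] that eps z
    unfolding Sn_def D_def by blast
  have est2: "norm (z n - Sn n) \<le> \<epsilon> n * (2 * B)" if "n \<ge> 1" for n
    using step_est(2)[where T=T and C=C and p=q and zz="z n" and f=f and B=B and n=n and e="\<epsilon> n", OF TC ne qD zC[OF that(1)] fzC[OF that(1)] B that(1)] that eps z
    unfolding Sn_def by blast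
  have est3: "norm (z n - T (z n))^2 \<le> 64 * \<epsilon> n * B^2" if "n \<ge> 2" for n
  proof -
    have n1: "n \<ge> 1" using that by simp
    show ?thesis
      using step_est(3)[where T=T and C=C and p=q and zz="z n" and f=f and B=B and n=n and e="\<epsilon> n", OF TC ne qD zC[OF n1] fzC[OF n1] B n1] that eps z n1
      by blast
  qed
  have lim1: "(\<lambda>n. z n - T (z n)) \<longlonglongrightarrow> 0"
  proof (rule Lim_null_comparison)
    show "\<forall>\<^sub>F n in sequentially. norm (z n - T (z n)) \<le> sqrt (64 * \<epsilon> n * B^2)"
      using est3 unfolding eventually_sequentially by (intro exI[of _ 2]) (auto intro: real_le_rsqrt)
    have "(\<lambda>n. sqrt (64 * \<epsilon> n * B^2)) \<longlonglongrightarrow> sqrt (64 * 0 * B^2)"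
      by (intro tendsto_intros epsl)
    thus "(\<lambda>n. sqrt (64 * \<epsilon> n * B^2)) \<longlonglongrightarrow> 0" by simp
  qed
  have lim2: "(\<lambda>n. \<epsilon> n * (2 * B)) \<longlonglongrightarrow> 0"
    using tendsto_mult[OF epsl tendsto_const[of "2 * B"]] by simp
  obtain e where e: "e > 0" and nev: "\<not> eventually (\<lambda>n. dist (z n) q < e) sequentially"
    using nconv unfolding tendsto_iff by blast
  define SS where "SS = {n. n \<ge> 1 \<and> e \<le> dist (z n) q}"
  have infSS: "infinite SS"
  proof
    assume "finite SS"
    then obtain N where N: "SS \<subseteq> {..<N}" using finite_nat_bounded by blast
    have "eventually (\<lambda>n. dist (z n) q < e) sequentially"
      unfolding eventually_sequentially
    proof (intro exI[of _ "max N 1"] allI impI)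
      fix n assume "max N 1 \<le> n"
      hence "n \<notin> SS" "n \<ge> 1" using N by auto
      thus "dist (z n) q < e" unfolding SS_def by auto
    qed
    thus False using nev by blast
  qed
  obtain r :: "nat \<Rightarrow> nat" where r: "strict_mono r" "\<forall>j. r j \<in> SS"
    using infinite_enumerate[OF infSS] by blast
  have "\<forall>j. (z \<circ> r) j \<in> C" using r zC unfolding SS_def by auto
  then obtain l r2 where l: "l \<in> C" and r2: "strict_mono (r2 :: nat \<Rightarrow> nat)"
    and lim: "((z \<circ> r) \<circ> r2) \<longlonglongrightarrow> l"
    using seq_compactE[OF compact_imp_seq_compact[OF Ccpt]] by metis
  define s where "s = r \<circ> r2"
  have s: "strict_mono s" unfolding s_def using r(1) r2 by (rule strict_mono_o)
  have zs: "(\<lambda>j. z (s j)) \<longlonglongrightarrow> l" using lim unfolding s_def by (simp add: o_def)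
  have s1: "s j \<ge> 1" and sd: "e \<le> dist (z (s j)) q" for j
    using r(2) unfolding s_def SS_def by auto
  have zsC: "z (s j) \<in> C" for j using zC[OF s1] .
  have evC: "\<forall>\<^sub>F j in sequentially. z (s j) \<in> C" using zsC by simp
  have "(\<lambda>j. z (s j) - T (z (s j))) \<longlonglongrightarrow> 0"
    using LIMSEQ_subseq_LIMSEQ[OF lim1 s] by (simp add: o_def)
  moreover have "(\<lambda>j. z (s j) - T (z (s j))) \<longlonglongrightarrow> l - T l"
    by (intro tendsto_diff zs continuous_on_tendsto_compose[OF nonexp_cont[OF ne] zs l evC])
  ultimately have "l - T l = 0" using LIMSEQ_unique by blast
  hence lD: "l \<in> D" using l unfolding D_def Fix_def by simp
  have lVI: "0 \<le> inner (f l - l) (l - p)" if pD: "p \<in> D" for p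
  proof (rule tendsto_le[OF sequentially_bot])
    show "(\<lambda>j. inner (f (z (s j)) - z (s j)) (z (s j) - p)) \<longlonglongrightarrow> inner (f l - l) (l - p)"
      by (intro tendsto_intros zs continuous_on_tendsto_compose[OF nonexp_cont[OF fne] zs l evC])
    have "(\<lambda>j. - (\<epsilon> (s j) * (2 * B) * (2 * B))) \<longlonglongrightarrow> - (0 * (2 * B))"
      using LIMSEQ_subseq_LIMSEQ[OF lim2 s] by (intro tendsto_intros) (simp add: o_def)
    thus "(\<lambda>j. - (\<epsilon> (s j) * (2 * B) * (2 * B))) \<longlonglongrightarrow> 0" by simp
    show "\<forall>\<^sub>F j in sequentially. - (\<epsilon> (s j) * (2 * B) * (2 * B))
            \<le> inner (f (z (s j)) - z (s j)) (z (s j) - p)"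
    proof (intro always_eventually allI)
      fix j
      let ?z = "z (s j)" and ?S = "Sn (s j)"
      have pC: "p \<in> C" using pD unfolding D_def Fix_def by auto
      have a: "0 \<le> inner (f ?z - ?S) (?z - p)" using est1[OF s1 pD] .
      have b: "norm (?z - ?S) \<le> \<epsilon> (s j) * (2 * B)" using est2[OF s1] .
      have c: "norm (?z - p) \<le> 2 * B"
        using norm_triangle_ineq4[of ?z p] bspec[OF B zsC[of j]] bspec[OF B pC] by linarith
      have "inner (?S - ?z) (?z - p) \<ge> - (norm (?S - ?z) * norm (?z - p))"
        using Cauchy_Schwarz_ineq2[of "?S - ?z" "?z - p"] by linarith
      moreover have "norm (?S - ?z) * norm (?z - p) \<le> \<epsilon> (s j) * (2 * B) * (2 * B)"
        using b c B0 eps[of "s j"] by (intro mult_mono) (auto simp: norm_minus_commute)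
      moreover have "inner (f ?z - ?z) (?z - p) = inner (f ?z - ?S) (?z - p) + inner (?S - ?z) (?z - p)"
        by (simp add: inner_diff_left)
      ultimately show "- (\<epsilon> (s j) * (2 * B) * (2 * B)) \<le> inner (f ?z - ?z) (?z - p)"
        using a by linarith
    qed
  qed
  have ql: "l = q"
  proof -
    define d where "d = l - q"
    have 1: "inner (f q - q) d \<le> 0" using qVI lD unfolding d_def D_def by blast
    have 2: "0 \<le> inner (f l - l) d" using lVI[of q] qD unfolding d_def D_def by blast
    have qC: "q \<in> C" using qD unfolding Fix_def by auto
    have "inner (f l - l) d - inner (f q - q) d = inner (f l - f q) d - inner d d"
      unfolding d_def by (simp add: inner_diff_left)
    hence 3: "inner d d \<le> inner (f l - f q) d" using 1 2 by linarith
    also have "\<dots> \<le> norm (f l - f q) * norm d" by (rule norm_cauchy_schwarz)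
    also have "\<dots> \<le> (\<alpha> * norm d) * norm d"
      using fcon l qC unfolding d_def by (intro mult_right_mono) auto
    finally have "norm d * norm d \<le> \<alpha> * (norm d * norm d)"
      by (simp add: power2_norm_eq_inner[symmetric] power2_eq_square)
    hence "(1 - \<alpha>) * (norm d * norm d) \<le> 0" by (simp add: algebra_simps)
    hence "norm d * norm d \<le> 0" using al by (simp add: mult_le_0_iff)
    hence "d = 0" by (metis mult_le_0_iff norm_eq_zero norm_ge_zero order_antisym)
    thus ?thesis unfolding d_def by simp
  qed
  have "eventually (\<lambda>j. dist (z (s j)) q < e) sequentially"
    using zs e unfolding ql tendsto_iff by blast
  then obtain J where "\<forall>j\<ge>J. dist (z (s j)) q < e" unfolding eventually_sequentially by blast
  thus False using sd[of J] by auto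
qed



lemma core:
  fixes C :: "'a::real_inner set"
  assumes Cne: "C \<noteq> {}" and Ccpt: "compact C" and Ccvx: "convex C"
    and TC: "T ` C \<subseteq> C" and ne: "nonexpansive_on C T" and Fne: "Fix C T \<noteq> {}"
    and fC: "f ` C \<subseteq> C" and al: "0 \<le> \<alpha>" "\<alpha> < 1"
    and fcon: "\<forall>x\<in>C. \<forall>y\<in>C. norm (f x - f y) \<le> \<alpha> * norm (x - y)"
    and eps: "\<And>n. 0 < \<epsilon> n \<and> \<epsilon> n < 1" and epsl: "\<epsilon> \<longlonglongrightarrow> 0"
  shows "\<exists>P x. sunny_nonexpansive_retraction C (Fix C T) P
          \<and> (\<forall>Q. sunny_nonexpansive_retraction C (Fix C T) Q \<longrightarrow> (\<forall>y\<in>C. Q y = P y))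
          \<and> x \<in> C
          \<and> (\<forall>z :: nat \<Rightarrow> 'a. (\<forall>n\<ge>1. z n \<in> C \<and>
             z n = \<epsilon> n *\<^sub>R f (z n) + (1 - \<epsilon> n) *\<^sub>R ((1 / real n) *\<^sub>R (\<Sum>k=1..n. (T ^^ k) (z n))))
             \<longrightarrow> z \<longlonglongrightarrow> P x)"
proof -
  define D where "D = Fix C T"
  have Dcpt: "compact D" unfolding D_def by (rule Fix_compact[OF Ccpt ne])
  have Dcvx: "convex D" unfolding D_def by (rule Fix_convex[OF Ccvx TC ne])
  have Dne: "D \<noteq> {}" using Fne unfolding D_def .
  have DC: "D \<subseteq> C" unfolding D_def Fix_def by auto
  have fne: "nonexpansive_on C f"
    unfolding nonexpansive_on_def
  proof (intro ballI)
    fix x y assume "x \<in> C" "y \<in> C"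
    hence "norm (f x - f y) \<le> \<alpha> * norm (x - y)" using fcon by blast
    also have "\<dots> \<le> 1 * norm (x - y)" using al by (intro mult_right_mono) auto
    finally show "norm (f x - f y) \<le> norm (x - y)" by simp
  qed
  have pne: "nonexpansive_on UNIV (proj D)"
    unfolding nonexpansive_on_def using proj_nonexp[OF Dcpt Dne Dcvx] by blast
  have contg: "continuous_on D (\<lambda>x. dist (proj D (f x)) x)"
  proof -
    have "continuous_on D f" using continuous_on_subset[OF nonexp_cont[OF fne] DC] .
    hence "continuous_on D (proj D \<circ> f)"
      using continuous_on_compose2[OF nonexp_cont[OF pne], of D f] by (simp add: o_def)
    thus ?thesis by (intro continuous_intros) (simp add: o_def)
  qed
  obtain q where qD: "q \<in> D" and qmin: "\<forall>y\<in>D. dist (proj D (f q)) q \<le> dist (proj D (f y)) y"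
    using continuous_attains_inf[OF Dcpt Dne contg] by blast
  have qfix: "proj D (f q) = q"
  proof (rule ccontr)
    assume neq: "proj D (f q) \<noteq> q"
    define g where "g = proj D (f q)"
    have gD: "g \<in> D" unfolding g_def using proj_ex[OF Dcpt Dne] by blast
    have "dist (proj D (f g)) g = norm (proj D (f g) - proj D (f q))" by (simp add: g_def dist_norm)
    also have "\<dots> \<le> norm (f g - f q)" by (rule proj_nonexp[OF Dcpt Dne Dcvx])
    also have "\<dots> \<le> \<alpha> * norm (g - q)" using fcon gD qD DC by blast
    also have "\<dots> < norm (g - q)" using al neq unfolding g_def by simp
    finally have "dist (proj D (f g)) g < dist (proj D (f q)) q" by (simp add: g_def dist_norm)
    thus False using qmin gD by fastforce
  qed
  have qVI: "\<forall>p\<in>D. inner (f q - q) (p - q) \<le> 0"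
    using proj_dot[OF Dcpt Dne Dcvx, of _ "f q"] qfix by simp
  have qC: "q \<in> C" using qD DC by blast
  show ?thesis
  proof (intro exI conjI allI impI ballI)
    show "sunny_nonexpansive_retraction C (Fix C T) (proj D)"
      unfolding D_def[symmetric] by (rule proj_snr[OF Dcpt Dne Dcvx DC])
    fix Q y assume "sunny_nonexpansive_retraction C (Fix C T) Q" "y \<in> C"
    thus "Q y = proj D y" using snr_unique[OF _ Ccvx Dcpt Dne Dcvx] unfolding D_def by blast
  next
    show "f q \<in> C" using fC qC by blast
  next
    fix z :: "nat \<Rightarrow> 'a"
    assume z: "\<forall>n\<ge>1. z n \<in> C \<and>
             z n = \<epsilon> n *\<^sub>R f (z n) + (1 - \<epsilon> n) *\<^sub>R ((1 / real n) *\<^sub>R (\<Sum>k=1..n. (T ^^ k) (z n)))"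
    have "z \<longlonglongrightarrow> q"
      by (rule core_conv[OF Cne Ccpt Ccvx TC ne fC al fcon eps epsl _ _ z])
        (use qD qVI in \<open>auto simp: D_def\<close>)
    thus "z \<longlonglongrightarrow> proj D (f q)" using qfix by simp
  qed
qed



theorem corollary4p1:
  fixes I :: "'i set"
    and C :: "'i \<Rightarrow> 'a::{real_inner, complete_space} set"
    and T f :: "'i \<Rightarrow> 'a \<Rightarrow> 'a"
    and \<alpha> :: "'i \<Rightarrow> real"
    and \<epsilon> :: "nat \<Rightarrow> real"
  assumes "I \<noteq> {}"
    and "\<And>i. i \<in> I \<Longrightarrow> C i \<noteq> {} \<and> compact (C i) \<and> convex (C i)"
    and "\<And>i. i \<in> I \<Longrightarrow> T i ` C i \<subseteq> C i \<and> nonexpansive_on (C i) (T i) \<and> Fix (C i) (T i) \<noteq> {}"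
    and "\<And>i. i \<in> I \<Longrightarrow> f i ` C i \<subseteq> C i \<and> 0 \<le> \<alpha> i \<and> \<alpha> i < 1 \<and>
           (\<forall>x\<in>C i. \<forall>y\<in>C i. norm (f i x - f i y) \<le> \<alpha> i * norm (x - y))"
    and "\<And>n. 0 < \<epsilon> n \<and> \<epsilon> n < 1"
    and "\<epsilon> \<longlonglongrightarrow> 0"
  shows "\<exists>P x. (\<forall>i\<in>I. sunny_nonexpansive_retraction (C i) (Fix (C i) (T i)) (P i)
              \<and> (\<forall>Q. sunny_nonexpansive_retraction (C i) (Fix (C i) (T i)) Q \<longrightarrow> (\<forall>y\<in>C i. Q y = P i y))
              \<and> x i \<in> C i)
          \<and> (\<forall>z :: nat \<Rightarrow> 'i \<Rightarrow> 'a.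
               (\<forall>n\<ge>1. \<forall>i\<in>I. z n i \<in> C i \<and>
                  z n i = \<epsilon> n *\<^sub>R f i (z n i)
                     + (1 - \<epsilon> n) *\<^sub>R ((1 / real n) *\<^sub>R (\<Sum>k=1..n. (T i ^^ k) (z n i))))
               \<longrightarrow> limitin (product_topology (\<lambda>i. euclidean) I)
                     (\<lambda>n. restrict (z n) I) (restrict (\<lambda>i. P i (x i)) I) sequentially)"
proof -
  define R where "R i P x \<longleftrightarrow> sunny_nonexpansive_retraction (C i) (Fix (C i) (T i)) P
          \<and> (\<forall>Q. sunny_nonexpansive_retraction (C i) (Fix (C i) (T i)) Q \<longrightarrow> (\<forall>y\<in>C i. Q y = P y))
          \<and> x \<in> C i
          \<and> (\<forall>z :: nat \<Rightarrow> 'a. (\<forall>n\<ge>1. z n \<in> C i \<and>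
             z n = \<epsilon> n *\<^sub>R f i (z n) + (1 - \<epsilon> n) *\<^sub>R ((1 / real n) *\<^sub>R (\<Sum>k=1..n. (T i ^^ k) (z n))))
             \<longrightarrow> z \<longlonglongrightarrow> P x)" for i P x
  have ex: "\<forall>i\<in>I. \<exists>P x. R i P x"
  proof
    fix i assume i: "i \<in> I"
    have c1: "C i \<noteq> {}" "compact (C i)" "convex (C i)" using assms(2)[OF i] by auto
    have t1: "T i ` C i \<subseteq> C i" "nonexpansive_on (C i) (T i)" "Fix (C i) (T i) \<noteq> {}"
      using assms(3)[OF i] by auto
    have f1: "f i ` C i \<subseteq> C i" "0 \<le> \<alpha> i" "\<alpha> i < 1"
      "\<forall>x\<in>C i. \<forall>y\<in>C i. norm (f i x - f i y) \<le> \<alpha> i * norm (x - y)"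
      using assms(4)[OF i] by auto
    show "\<exists>P x. R i P x" unfolding R_def
      by (rule core[OF c1 t1 f1 assms(5) assms(6)])
  qed
  obtain P where P: "\<forall>i\<in>I. \<exists>x. R i (P i) x" using bchoice[OF ex] by blast
  obtain x where x: "\<forall>i\<in>I. R i (P i) (x i)" using bchoice[OF P] by blast
  have Ri: "R i (P i) (x i)" if "i \<in> I" for i using x that by blast
  show ?thesis
  proof (intro exI conjI ballI allI impI)
    fix i assume i: "i \<in> I"
    note Rd = Ri[OF i, unfolded R_def]
    show "sunny_nonexpansive_retraction (C i) (Fix (C i) (T i)) (P i)" using Rd by (rule conjunct1)
    show "x i \<in> C i" using Rd[THEN conjunct2, THEN conjunct2] by (rule conjunct1)
    fix Q y assume Q: "sunny_nonexpansive_retraction (C i) (Fix (C i) (T i)) Q" and y: "y \<in> C i"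
    show "Q y = P i y" using Rd[THEN conjunct2, THEN conjunct1, rule_format, OF Q y] .
  next
    fix z :: "nat \<Rightarrow> 'i \<Rightarrow> 'a"
    assume z: "\<forall>n\<ge>1. \<forall>i\<in>I. z n i \<in> C i \<and>
                  z n i = \<epsilon> n *\<^sub>R f i (z n i)
                     + (1 - \<epsilon> n) *\<^sub>R ((1 / real n) *\<^sub>R (\<Sum>k=1..n. (T i ^^ k) (z n i)))"
    have comp: "(\<lambda>n. z n i) \<longlonglongrightarrow> P i (x i)" if i: "i \<in> I" for i
    proof -
      note Rd = Ri[OF i, unfolded R_def]
      have zi: "\<forall>n\<ge>1. z n i \<in> C i \<and>
             z n i = \<epsilon> n *\<^sub>R f i (z n i) + (1 - \<epsilon> n) *\<^sub>R ((1 / real n) *\<^sub>R (\<Sum>k=1..n. (T i ^^ k) (z n i)))"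
        using z i by blast
      show ?thesis using Rd[THEN conjunct2, THEN conjunct2, THEN conjunct2, THEN spec[of _ "\<lambda>n. z n i"], THEN mp, OF zi] .
    qed
    have ev: "\<forall>\<^sub>F n in sequentially. restrict (z n) I \<in> topspace (product_topology (\<lambda>i. euclidean) I)"
      by simp
    show "limitin (product_topology (\<lambda>i. euclidean) I)
                     (\<lambda>n. restrict (z n) I) (restrict (\<lambda>i. P i (x i)) I) sequentially"
      unfolding limitin_componentwise
    proof (intro conjI ev ballI)
      show "restrict (\<lambda>i. P i (x i)) I \<in> extensional I" by simp
      fix i assume "i \<in> I"
      thus "limitin euclidean (\<lambda>c. restrict (z c) I i) (restrict (\<lambda>i. P i (x i)) I i) sequentially"
        using comp by simp
    qed
  qed
qed

end
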